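(* Let $X$ and $Y$ be real Banach spaces. Then $(Lip_0(X,Y),Lip(\cdot))$ is isometrically isomorphic to $L(F_Y(X),Y)$, via the map $T\mapsto T\circ\delta_X^Y$.
   Context: $Lip_0(X,Y)$ is the Banach space of Lipschitz maps $f:X\to Y$ with $f(0)=0$ and norm $Lip(f)=\sup_{x\neq y}\|f(x)-f(y)\|/\|x-y\|$. For $x\in X$, $\delta_x^Y\in L(Lip_0(X,Y),Y)$ is evaluation $\delta_x^Y(f)=f(x)$, and $\delta_X^Y:X\to L(Lip_0(X,Y),Y)$ is the map $x\mapsto\delta_x^Y$. $F_Y(X)$ is the norm-closed linear span of $\{\delta_x^Y:x\in X\}$ in $L(Lip_0(X,Y),Y)$ with operator norm; $L(F_Y(X),Y)$ carries the operator norm. *)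

theory Defs
  imports "HOL-Analysis.Analysis"
begin

text \<open>Lipschitz constant Lip(f) = sup of norm (f x - f y) / norm (x - y) over x \<noteq> y
  (0 is included so that the value is 0 for the trivial space).\<close>
definition lipnorm :: "('a::real_normed_vector \<Rightarrow> 'b::real_normed_vector) \<Rightarrow> real" where
  "lipnorm f = Sup (insert 0 {norm (f x - f y) / norm (x - y) | x y. x \<noteq> y})"

definition Lip0 :: "('a::real_normed_vector \<Rightarrow> 'b::real_normed_vector) set" where
  "Lip0 = {f. f 0 = 0 \<and> (\<exists>C. lipschitz_on C UNIV f)}"

text \<open>Elements of L(Lip_0(X,Y),Y): maps (('a \<Rightarrow> 'b) \<Rightarrow> 'b), linear and bounded on Lip0,
  normalised to be 0 outside Lip0 (so that equality of operators is extensional).\<close>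
definition bl_lip :: "(('a::real_normed_vector \<Rightarrow> 'b::real_normed_vector) \<Rightarrow> 'b) \<Rightarrow> bool" where
  "bl_lip \<Phi> \<longleftrightarrow>
     (\<forall>f\<in>Lip0. \<forall>g\<in>Lip0. \<Phi> (\<lambda>x. f x + g x) = \<Phi> f + \<Phi> g) \<and>
     (\<forall>c. \<forall>f\<in>Lip0. \<Phi> (\<lambda>x. c *\<^sub>R f x) = c *\<^sub>R \<Phi> f) \<and>
     (\<exists>K. \<forall>f\<in>Lip0. norm (\<Phi> f) \<le> K * lipnorm f) \<and>
     (\<forall>f. f \<notin> Lip0 \<longrightarrow> \<Phi> f = 0)"

definition opnormL :: "(('a::real_normed_vector \<Rightarrow> 'b::real_normed_vector) \<Rightarrow> 'b) \<Rightarrow> real" where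
  "opnormL \<Phi> = Sup {norm (\<Phi> f) | f. f \<in> Lip0 \<and> lipnorm f \<le> 1}"

definition delta :: "'a::real_normed_vector \<Rightarrow> ('a \<Rightarrow> 'b::real_normed_vector) \<Rightarrow> 'b" where
  "delta x = (\<lambda>f. if f \<in> Lip0 then f x else 0)"

definition span_delta :: "((('a::real_normed_vector) \<Rightarrow> 'b::real_normed_vector) \<Rightarrow> 'b) set" where
  "span_delta = {\<Phi>. \<exists>(n::nat) c p. \<Phi> = (\<lambda>f. \<Sum>i<n. c i *\<^sub>R delta (p i) f)}"

definition FY :: "((('a::real_normed_vector) \<Rightarrow> 'b::real_normed_vector) \<Rightarrow> 'b) set" where
  "FY = {\<Phi>. bl_lip \<Phi> \<and>
     (\<exists>S. (\<forall>n. S n \<in> span_delta) \<and> (\<lambda>n. opnormL (\<lambda>f. S n f - \<Phi> f)) \<longlonglongrightarrow> 0)}"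

definition bl_F :: "((('a::real_normed_vector \<Rightarrow> 'b::real_normed_vector) \<Rightarrow> 'b) \<Rightarrow> 'b) \<Rightarrow> bool" where
  "bl_F T \<longleftrightarrow>
     (\<forall>\<Phi>\<in>FY. \<forall>\<Psi>\<in>FY. T (\<lambda>f. \<Phi> f + \<Psi> f) = T \<Phi> + T \<Psi>) \<and>
     (\<forall>c. \<forall>\<Phi>\<in>FY. T (\<lambda>f. c *\<^sub>R \<Phi> f) = c *\<^sub>R T \<Phi>) \<and>
     (\<exists>K. \<forall>\<Phi>\<in>FY. norm (T \<Phi>) \<le> K * opnormL \<Phi>) \<and>
     (\<forall>\<Phi>. \<Phi> \<notin> FY \<longrightarrow> T \<Phi> = 0)"

definition opnormF :: "((('a::real_normed_vector \<Rightarrow> 'b::real_normed_vector) \<Rightarrow> 'b) \<Rightarrow> 'b) \<Rightarrow> real" where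
  "opnormF T = Sup {norm (T \<Phi>) | \<Phi>. \<Phi> \<in> FY \<and> opnormL \<Phi> \<le> 1}"

definition compdelta :: "((('a::real_normed_vector \<Rightarrow> 'b::real_normed_vector) \<Rightarrow> 'b) \<Rightarrow> 'b) \<Rightarrow> 'a \<Rightarrow> 'b" where
  "compdelta T = T \<circ> delta"

end

theory Submission
  imports Defs
begin

section \<open>Lipschitz norm\<close>

lemma Lip0I:
  assumes "f 0 = 0" "0 \<le> C" "\<And>x y. norm (f x - f y) \<le> C * norm (x - y)"
  shows "f \<in> Lip0"
  unfolding Lip0_def using assms
  by (auto intro!: exI[of _ C] lipschitz_onI simp: dist_norm)

lemma Lip0E:
  fixes f :: "'a::real_normed_vector \<Rightarrow> 'b::real_normed_vector"
  assumes "f \<in> Lip0"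
  obtains C :: real where "f 0 = 0" "0 \<le> C" "\<And>x y. norm (f x - f y) \<le> C * norm (x - y)"
proof -
  from assms obtain C where "f 0 = 0" "lipschitz_on C UNIV f" unfolding Lip0_def by auto
  then show ?thesis using that unfolding lipschitz_on_def by (auto simp: dist_norm)
qed

lemma lip_bdd:
  assumes "f \<in> Lip0"
  shows "bdd_above (insert 0 {norm (f x - f y) / norm (x - y) | x y. x \<noteq> y})"
proof -
  obtain C where C: "f 0 = 0" "0 \<le> C" "\<And>x y. norm (f x - f y) \<le> C * norm (x - y)"
    using Lip0E[OF assms] by metis
  show ?thesis
  proof (rule bdd_aboveI[of _ C])
    fix r assume "r \<in> insert 0 {norm (f x - f y) / norm (x - y) | x y. x \<noteq> y}"
    then show "r \<le> C" using C by (auto simp: pos_divide_le_eq)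
  qed
qed

lemma lip_bdd':
  assumes "f \<in> Lip0"
  shows "bdd_above {norm (f x - f y) / norm (x - y) | x y. x \<noteq> y}"
  using lip_bdd[OF assms] by simp

lemma lip_nonneg: "f \<in> Lip0 \<Longrightarrow> 0 \<le> lipnorm f"
  unfolding lipnorm_def by (rule cSup_upper) (auto simp: lip_bdd')

lemma lip_ineq:
  assumes "f \<in> Lip0"
  shows "norm (f x - f y) \<le> lipnorm f * norm (x - y)"
proof (cases "x = y")
  case True then show ?thesis by simp
next
  case False
  have "norm (f x - f y) / norm (x - y) \<le> lipnorm f"
    unfolding lipnorm_def using False by (intro cSup_upper) (auto simp: lip_bdd' assms)
  then show ?thesis using False by (simp add: pos_divide_le_eq)
qed

lemma lip_le:
  assumes "0 \<le> C" "\<And>x y. norm (f x - f y) \<le> C * norm (x - y)"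
  shows "lipnorm f \<le> C"
  unfolding lipnorm_def using assms by (intro cSup_least) (auto simp: pos_divide_le_eq)

lemma Lip0_zero: "(\<lambda>x. 0) \<in> Lip0"
  by (rule Lip0I[of _ 0]) auto

lemma lip_zero: "lipnorm (\<lambda>x::'a::real_normed_vector. 0::'b::real_normed_vector) = 0"
  by (intro antisym lip_le lip_nonneg Lip0_zero) auto

lemma Lip0_add:
  assumes "f \<in> Lip0" "g \<in> Lip0"
  shows "(\<lambda>x. f x + g x) \<in> Lip0"
proof -
  obtain C where C: "f 0 = 0" "0 \<le> C" "\<And>x y. norm (f x - f y) \<le> C * norm (x - y)"
    using Lip0E[OF assms(1)] by metis
  obtain D where D: "g 0 = 0" "0 \<le> D" "\<And>x y. norm (g x - g y) \<le> D * norm (x - y)"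
    using Lip0E[OF assms(2)] by metis
  show ?thesis
  proof (rule Lip0I[of _ "C + D"])
    fix x y
    have "norm ((f x + g x) - (f y + g y)) \<le> norm (f x - f y) + norm (g x - g y)"
      by (metis add_diff_add norm_triangle_ineq)
    also have "\<dots> \<le> (C + D) * norm (x - y)" using C(3)[of x y] D(3)[of x y]
      by (simp add: distrib_right)
    finally show "norm ((f x + g x) - (f y + g y)) \<le> (C + D) * norm (x - y)" .
  qed (use C D in auto)
qed

lemma Lip0_scale:
  assumes "f \<in> Lip0"
  shows "(\<lambda>x. c *\<^sub>R f x) \<in> Lip0"
proof -
  obtain C where C: "f 0 = 0" "0 \<le> C" "\<And>x y. norm (f x - f y) \<le> C * norm (x - y)"
    using Lip0E[OF assms(1)] by metis
  show ?thesis
  proof (rule Lip0I[of _ "\<bar>c\<bar> * C"])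
    fix x y
    have "norm (c *\<^sub>R f x - c *\<^sub>R f y) = \<bar>c\<bar> * norm (f x - f y)"
      by (metis norm_scaleR scaleR_diff_right)
    also have "\<dots> \<le> \<bar>c\<bar> * (C * norm (x - y))" using C(3)[of x y]
      by (simp add: mult_left_mono)
    finally show "norm (c *\<^sub>R f x - c *\<^sub>R f y) \<le> \<bar>c\<bar> * C * norm (x - y)" by simp
  qed (use C in auto)
qed

lemma lip_zero_imp:
  assumes "f \<in> Lip0" "lipnorm f = 0"
  shows "f = (\<lambda>x. 0)"
proof
  fix x
  have "f 0 = 0" using assms(1) by (auto simp: Lip0_def)
  then show "f x = 0" using lip_ineq[OF assms(1), of x 0] assms(2) by simp
qed

section \<open>Operator norm on L(Lip0,Y)\<close>

lemma bl_lip_bound: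
  assumes "bl_lip \<Phi>"
  obtains K where "0 \<le> K" "\<And>f. f \<in> Lip0 \<Longrightarrow> norm (\<Phi> f) \<le> K * lipnorm f"
proof -
  obtain K where K: "\<forall>f\<in>Lip0. norm (\<Phi> f) \<le> K * lipnorm f"
    using assms unfolding bl_lip_def by blast
  have "norm (\<Phi> f) \<le> max K 0 * lipnorm f" if "f \<in> Lip0" for f
  proof -
    have "K * lipnorm f \<le> max K 0 * lipnorm f"
      using lip_nonneg[OF that] by (intro mult_right_mono) auto
    then show ?thesis using K that by force
  qed
  then show ?thesis using that[of "max K 0"] by auto
qed

lemma bl_lip_add: "bl_lip \<Phi> \<Longrightarrow> f \<in> Lip0 \<Longrightarrow> g \<in> Lip0 \<Longrightarrow> \<Phi> (\<lambda>x. f x + g x) = \<Phi> f + \<Phi> g"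
  unfolding bl_lip_def by blast

lemma bl_lip_scale: "bl_lip \<Phi> \<Longrightarrow> f \<in> Lip0 \<Longrightarrow> \<Phi> (\<lambda>x. c *\<^sub>R f x) = c *\<^sub>R \<Phi> f"
  unfolding bl_lip_def by blast

lemma bl_lip_out: "bl_lip \<Phi> \<Longrightarrow> f \<notin> Lip0 \<Longrightarrow> \<Phi> f = 0"
  unfolding bl_lip_def by blast

lemma bl_lip_zero_fun: "bl_lip \<Phi> \<Longrightarrow> \<Phi> (\<lambda>x. 0) = 0"
  using bl_lip_scale[of \<Phi> "\<lambda>x. 0" 0] Lip0_zero by simp

lemma opL_bdd:
  assumes "bl_lip \<Phi>"
  shows "bdd_above {norm (\<Phi> f) | f. f \<in> Lip0 \<and> lipnorm f \<le> 1}"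
proof -
  obtain K where K: "0 \<le> K" "\<And>f. f \<in> Lip0 \<Longrightarrow> norm (\<Phi> f) \<le> K * lipnorm f"
    using bl_lip_bound[OF assms] by blast
  show ?thesis
  proof (rule bdd_aboveI[of _ K])
    fix r assume "r \<in> {norm (\<Phi> f) | f. f \<in> Lip0 \<and> lipnorm f \<le> 1}"
    then obtain f where f: "f \<in> Lip0" "lipnorm f \<le> 1" "r = norm (\<Phi> f)" by blast
    have "K * lipnorm f \<le> K * 1" using f K by (intro mult_left_mono) auto
    then show "r \<le> K" using K(2)[OF f(1)] f by simp
  qed
qed

lemma opL_upper:
  assumes "bl_lip \<Phi>" "f \<in> Lip0" "lipnorm f \<le> 1"
  shows "norm (\<Phi> f) \<le> opnormL \<Phi>"
  unfolding opnormL_def using assms by (intro cSup_upper opL_bdd) auto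

lemma opL_nonneg:
  assumes "bl_lip \<Phi>"
  shows "0 \<le> opnormL \<Phi>"
  using opL_upper[OF assms Lip0_zero] lip_zero norm_ge_zero by (metis order.trans order_refl zero_le_one)

lemma opL_le:
  fixes \<Phi> :: "('a::real_normed_vector \<Rightarrow> 'b::real_normed_vector) \<Rightarrow> 'b"
  assumes "\<And>f. f \<in> Lip0 \<Longrightarrow> lipnorm f \<le> 1 \<Longrightarrow> norm (\<Phi> f) \<le> C"
  shows "opnormL \<Phi> \<le> C"
  unfolding opnormL_def
proof (rule cSup_least)
  show "{norm (\<Phi> f) | f. f \<in> Lip0 \<and> lipnorm f \<le> 1} \<noteq> {}"
    using Lip0_zero[where 'a='a and 'b='b] lip_zero[where 'a='a and 'b='b] by auto
qed (use assms in auto)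

lemma opL_ineq:
  assumes "bl_lip \<Phi>" "f \<in> Lip0"
  shows "norm (\<Phi> f) \<le> opnormL \<Phi> * lipnorm f"
proof (cases "lipnorm f = 0")
  case True
  then have "f = (\<lambda>x. 0)" using lip_zero_imp assms by blast
  then show ?thesis using bl_lip_zero_fun[OF assms(1)] by (simp add: lip_zero)
next
  case False
  define L where "L = lipnorm f"
  have L: "0 < L" using False lip_nonneg[OF assms(2)] L_def by auto
  define h where "h = (\<lambda>x. (1 / L) *\<^sub>R f x)"
  have h: "h \<in> Lip0" unfolding h_def by (rule Lip0_scale[OF assms(2)])
  have "lipnorm h \<le> 1"
  proof (rule lip_le)
    fix x y
    have "norm (h x - h y) = (1 / L) * norm (f x - f y)"
      unfolding h_def using L by (metis abs_of_pos norm_scaleR scaleR_diff_right zero_less_divide_1_iff)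
    also have "\<dots> \<le> (1 / L) * (L * norm (x - y))"
      using lip_ineq[OF assms(2), of x y] L L_def by (intro mult_left_mono) auto
    also have "\<dots> = 1 * norm (x - y)" using L by simp
    finally show "norm (h x - h y) \<le> 1 * norm (x - y)" .
  qed simp
  have "f = (\<lambda>x. L *\<^sub>R h x)" unfolding h_def using L by auto
  then have "\<Phi> f = L *\<^sub>R \<Phi> h" using bl_lip_scale[OF assms(1) h] by simp
  then have "norm (\<Phi> f) = L * norm (\<Phi> h)" using L by simp
  also have "\<dots> \<le> L * opnormL \<Phi>"
    using opL_upper[OF assms(1) h \<open>lipnorm h \<le> 1\<close>] L by (intro mult_left_mono) auto
  finally show ?thesis unfolding L_def by (simp add: mult.commute)
qed

lemma bl_lip_sum:
  assumes "bl_lip \<Phi>" "bl_lip \<Psi>"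
  shows "bl_lip (\<lambda>f. \<Phi> f + \<Psi> f)"
proof -
  obtain K where K: "0 \<le> K" "\<And>f. f \<in> Lip0 \<Longrightarrow> norm (\<Phi> f) \<le> K * lipnorm f"
    using bl_lip_bound[OF assms(1)] by blast
  obtain M where M: "0 \<le> M" "\<And>f. f \<in> Lip0 \<Longrightarrow> norm (\<Psi> f) \<le> M * lipnorm f"
    using bl_lip_bound[OF assms(2)] by blast
  have "norm (\<Phi> f + \<Psi> f) \<le> (K + M) * lipnorm f" if "f \<in> Lip0" for f
    using norm_triangle_le[of "\<Phi> f" "\<Psi> f"] K(2)[OF that] M(2)[OF that]
    by (simp add: distrib_right)
  then show ?thesis
    using assms unfolding bl_lip_def by (auto simp: Lip0_add Lip0_scale scaleR_add_right)
qed

lemma bl_lip_smult: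
  assumes "bl_lip \<Phi>"
  shows "bl_lip (\<lambda>f. c *\<^sub>R \<Phi> f)"
proof -
  obtain K where K: "0 \<le> K" "\<And>f. f \<in> Lip0 \<Longrightarrow> norm (\<Phi> f) \<le> K * lipnorm f"
    using bl_lip_bound[OF assms(1)] by blast
  have "norm (c *\<^sub>R \<Phi> f) \<le> (\<bar>c\<bar> * K) * lipnorm f" if "f \<in> Lip0" for f
    using K(2)[OF that] by (simp add: mult.assoc mult_left_mono)
  then show ?thesis
    using assms unfolding bl_lip_def by (auto simp: Lip0_add Lip0_scale scaleR_add_right)
qed

lemma bl_lip_diff:
  assumes "bl_lip \<Phi>" "bl_lip \<Psi>"
  shows "bl_lip (\<lambda>f. \<Phi> f - \<Psi> f)"
  using bl_lip_sum[OF assms(1) bl_lip_smult[OF assms(2), of "-1"]] by simp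

lemma bl_lip_zero: "bl_lip (\<lambda>f. 0)"
  unfolding bl_lip_def by (auto intro: exI[of _ 0])

lemma bl_lip_delta: "bl_lip (delta (x::'a::real_normed_vector) :: ('a \<Rightarrow> 'b::real_normed_vector) \<Rightarrow> 'b)"
proof -
  have b: "\<forall>f\<in>Lip0. norm (delta x f :: 'b) \<le> norm x * lipnorm f"
  proof
    fix f :: "'a \<Rightarrow> 'b" assume that: "f \<in> Lip0"
    have "f 0 = 0" using that by (auto simp: Lip0_def)
    then show "norm (delta x f) \<le> norm x * lipnorm f"
      using lip_ineq[OF that, of x 0] that by (simp add: delta_def mult.commute)
  qed
  have h1: "\<forall>f\<in>Lip0. \<forall>g\<in>Lip0. delta x (\<lambda>y. f y + g y) = delta x f + (delta x g :: 'b)"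
    by (auto simp: delta_def Lip0_add)
  have h2: "\<forall>c. \<forall>f\<in>Lip0. delta x (\<lambda>y. c *\<^sub>R f y) = c *\<^sub>R (delta x f :: 'b)"
    by (auto simp: delta_def Lip0_scale)
  have h4: "\<forall>f. f \<notin> Lip0 \<longrightarrow> (delta x f :: 'b) = 0"
    by (auto simp: delta_def)
  show ?thesis unfolding bl_lip_def using h1 h2 h4 b by blast
qed

lemma opL_triangle:
  fixes A B :: "('a::real_normed_vector \<Rightarrow> 'b::real_normed_vector) \<Rightarrow> 'b"
  assumes "bl_lip A" "bl_lip B"
  shows "opnormL (\<lambda>f. A f + B f) \<le> opnormL A + opnormL B"
proof (rule opL_le)
  fix f :: "'a \<Rightarrow> 'b" assume f: "f \<in> Lip0" "lipnorm f \<le> 1"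
  show "norm (A f + B f) \<le> opnormL A + opnormL B"
    using norm_triangle_le[of "A f" "B f"] opL_upper[OF assms(1) f] opL_upper[OF assms(2) f] by simp
qed

lemma opL_smult:
  fixes A B :: "('a::real_normed_vector \<Rightarrow> 'b::real_normed_vector) \<Rightarrow> 'b"
  assumes "bl_lip A"
  shows "opnormL (\<lambda>f. c *\<^sub>R A f) \<le> \<bar>c\<bar> * opnormL A"
proof (rule opL_le)
  fix f :: "'a \<Rightarrow> 'b" assume f: "f \<in> Lip0" "lipnorm f \<le> 1"
  show "norm (c *\<^sub>R A f) \<le> \<bar>c\<bar> * opnormL A"
    using opL_upper[OF assms f] by (simp add: mult_left_mono)
qed

lemma opL_zero: "opnormL (\<lambda>f::('a::real_normed_vector \<Rightarrow> 'b::real_normed_vector). 0::'b) = 0"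
  by (intro antisym opL_le opL_nonneg bl_lip_zero) auto

section \<open>Span and F_Y(X)\<close>

lemma span_bl:
  "bl_lip (\<lambda>f::'a::real_normed_vector \<Rightarrow> 'b::real_normed_vector. \<Sum>i<(n::nat). c i *\<^sub>R delta (p i) f)"
proof (induction n)
  case 0
  then show ?case using bl_lip_zero by simp
next
  case (Suc n)
  have "bl_lip (\<lambda>f::'a \<Rightarrow> 'b. (\<Sum>i<n. c i *\<^sub>R delta (p i) f) + c n *\<^sub>R delta (p n) f)"
    by (intro bl_lip_sum Suc bl_lip_smult bl_lip_delta)
  then show ?case by simp
qed

lemma span_bl': "A \<in> span_delta \<Longrightarrow> bl_lip A"
  unfolding span_delta_def using span_bl by blast

lemma span_insert:
  assumes "A \<in> span_delta"
  shows "(\<lambda>f. A f + e *\<^sub>R delta x f) \<in> span_delta"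
proof -
  obtain n :: nat and c p where A: "A = (\<lambda>f. \<Sum>i<n. c i *\<^sub>R delta (p i) f)"
    using assms unfolding span_delta_def by blast
  have "(\<lambda>f. A f + e *\<^sub>R delta x f) = (\<lambda>f. \<Sum>i<Suc n. (c(n := e)) i *\<^sub>R delta ((p(n := x)) i) f)"
    unfolding A by (auto intro!: sum.cong)
  then show ?thesis unfolding span_delta_def
    by (intro CollectI exI[of _ "Suc n"] exI[of _ "c(n := e)"] exI[of _ "p(n := x)"])
qed

lemma span_add:
  assumes "A \<in> span_delta" "B \<in> span_delta"
  shows "(\<lambda>f. A f + B f) \<in> span_delta"
proof -
  obtain m :: nat and d q where B: "B = (\<lambda>f. \<Sum>i<m. d i *\<^sub>R delta (q i) f)"
    using assms unfolding span_delta_def by blast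
  have "(\<lambda>f. A f + (\<Sum>i<m. d i *\<^sub>R delta (q i) f)) \<in> span_delta"
  proof (induction m)
    case 0
    then show ?case using assms(1) by simp
  next
    case (Suc m)
    from span_insert[OF this, of "d m" "q m"] show ?case by (simp add: add.assoc)
  qed
  then show ?thesis unfolding B .
qed

lemma span_scale:
  assumes "A \<in> span_delta"
  shows "(\<lambda>f. e *\<^sub>R A f) \<in> span_delta"
proof -
  obtain n :: nat and c p where A: "A = (\<lambda>f. \<Sum>i<n. c i *\<^sub>R delta (p i) f)"
    using assms unfolding span_delta_def by blast
  have "(\<lambda>f. e *\<^sub>R A f) = (\<lambda>f. \<Sum>i<n. (e * c i) *\<^sub>R delta (p i) f)"
    unfolding A by (simp add: scaleR_sum_right)
  then show ?thesis unfolding span_delta_def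
    by (intro CollectI exI[of _ n] exI[of _ "\<lambda>i. e * c i"] exI[of _ p])
qed

lemma span_zero: "(\<lambda>f. 0) \<in> span_delta"
  unfolding span_delta_def by (rule CollectI, rule exI[of _ 0]) simp

lemma span_FY:
  assumes "A \<in> span_delta"
  shows "A \<in> FY"
proof -
  have "(\<lambda>f. A f - A f) = (\<lambda>f. 0)" by simp
  then have "(\<lambda>n. opnormL (\<lambda>f. A f - A f)) \<longlonglongrightarrow> 0" by (simp add: opL_zero)
  then show ?thesis unfolding FY_def using span_bl'[OF assms] assms
    by (auto intro!: exI[of _ "\<lambda>n. A"])
qed

lemma delta_span: "delta x \<in> span_delta"
  unfolding span_delta_def
  by (intro CollectI exI[of _ "Suc 0"] exI[of _ "\<lambda>i. 1"] exI[of _ "\<lambda>i. x"]) simp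

lemma FY_bl: "\<Phi> \<in> FY \<Longrightarrow> bl_lip \<Phi>"
  unfolding FY_def by blast

lemma FY_add:
  assumes "\<Phi> \<in> FY" "\<Psi> \<in> FY"
  shows "(\<lambda>f. \<Phi> f + \<Psi> f) \<in> FY"
proof -
  obtain S where S: "\<forall>n. S n \<in> span_delta" "(\<lambda>n. opnormL (\<lambda>f. S n f - \<Phi> f)) \<longlonglongrightarrow> 0"
    using assms(1) unfolding FY_def by blast
  obtain R where R: "\<forall>n. R n \<in> span_delta" "(\<lambda>n. opnormL (\<lambda>f. R n f - \<Psi> f)) \<longlonglongrightarrow> 0"
    using assms(2) unfolding FY_def by blast
  have bl: "bl_lip (\<lambda>f. S n f - \<Phi> f)" "bl_lip (\<lambda>f. R n f - \<Psi> f)" for n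
    using bl_lip_diff[OF span_bl'[OF S(1)[rule_format]] FY_bl[OF assms(1)]]
      bl_lip_diff[OF span_bl'[OF R(1)[rule_format]] FY_bl[OF assms(2)]] by auto
  have eq: "(\<lambda>f. (S n f + R n f) - (\<Phi> f + \<Psi> f)) = (\<lambda>f. (S n f - \<Phi> f) + (R n f - \<Psi> f))" for n
    by (simp add: algebra_simps)
  have up: "opnormL (\<lambda>f. (S n f + R n f) - (\<Phi> f + \<Psi> f))
      \<le> opnormL (\<lambda>f. S n f - \<Phi> f) + opnormL (\<lambda>f. R n f - \<Psi> f)" for n
    unfolding eq by (rule opL_triangle[OF bl])
  have lo: "0 \<le> opnormL (\<lambda>f. (S n f + R n f) - (\<Phi> f + \<Psi> f))" for n
    unfolding eq by (intro opL_nonneg bl_lip_sum bl)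
  have "(\<lambda>n. opnormL (\<lambda>f. (S n f + R n f) - (\<Phi> f + \<Psi> f))) \<longlonglongrightarrow> 0"
    by (rule tendsto_sandwich[OF _ _ tendsto_const tendsto_add_zero[OF S(2) R(2)]])
       (use up lo in auto)
  moreover have "bl_lip (\<lambda>f. \<Phi> f + \<Psi> f)" using assms by (intro bl_lip_sum FY_bl)
  moreover have "\<forall>n. (\<lambda>f. S n f + R n f) \<in> span_delta" using S R by (auto intro: span_add)
  ultimately show ?thesis unfolding FY_def
    by (intro CollectI conjI exI[of _ "\<lambda>n f. S n f + R n f"]) auto
qed

lemma FY_scale:
  assumes "\<Phi> \<in> FY"
  shows "(\<lambda>f. c *\<^sub>R \<Phi> f) \<in> FY"
proof -
  obtain S where S: "\<forall>n. S n \<in> span_delta" "(\<lambda>n. opnormL (\<lambda>f. S n f - \<Phi> f)) \<longlonglongrightarrow> 0"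
    using assms(1) unfolding FY_def by blast
  have bl: "bl_lip (\<lambda>f. S n f - \<Phi> f)" for n
    using bl_lip_diff[OF span_bl'[OF S(1)[rule_format]] FY_bl[OF assms(1)]] by auto
  have eq: "(\<lambda>f. c *\<^sub>R S n f - c *\<^sub>R \<Phi> f) = (\<lambda>f. c *\<^sub>R (S n f - \<Phi> f))" for n
    by (simp add: algebra_simps)
  have up: "opnormL (\<lambda>f. c *\<^sub>R S n f - c *\<^sub>R \<Phi> f) \<le> \<bar>c\<bar> * opnormL (\<lambda>f. S n f - \<Phi> f)" for n
    unfolding eq by (rule opL_smult[OF bl])
  have lo: "0 \<le> opnormL (\<lambda>f. c *\<^sub>R S n f - c *\<^sub>R \<Phi> f)" for n
    unfolding eq by (intro opL_nonneg bl_lip_smult bl)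
  have "(\<lambda>n. opnormL (\<lambda>f. c *\<^sub>R S n f - c *\<^sub>R \<Phi> f)) \<longlonglongrightarrow> 0"
    by (rule tendsto_sandwich[OF _ _ tendsto_const tendsto_mult_right_zero[OF S(2), of "\<bar>c\<bar>"]])
       (use up lo in auto)
  moreover have "bl_lip (\<lambda>f. c *\<^sub>R \<Phi> f)" using assms by (intro bl_lip_smult FY_bl)
  moreover have "\<forall>n. (\<lambda>f. c *\<^sub>R S n f) \<in> span_delta" using S by (auto intro: span_scale)
  ultimately show ?thesis unfolding FY_def
    by (intro CollectI conjI exI[of _ "\<lambda>n f. c *\<^sub>R S n f"]) auto
qed

lemma FY_diff:
  assumes "\<Phi> \<in> FY" "\<Psi> \<in> FY"
  shows "(\<lambda>f. \<Phi> f - \<Psi> f) \<in> FY"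
  using FY_add[OF assms(1) FY_scale[OF assms(2), of "-1"]] by simp

lemma FY_zero: "(\<lambda>f. 0) \<in> FY"
  by (rule span_FY[OF span_zero])

lemma delta_FY: "delta x \<in> FY"
  by (rule span_FY[OF delta_span])

section \<open>Operators on F_Y(X)\<close>

lemma blF_add: "bl_F T \<Longrightarrow> \<Phi> \<in> FY \<Longrightarrow> \<Psi> \<in> FY \<Longrightarrow> T (\<lambda>f. \<Phi> f + \<Psi> f) = T \<Phi> + T \<Psi>"
  unfolding bl_F_def by blast

lemma blF_scale: "bl_F T \<Longrightarrow> \<Phi> \<in> FY \<Longrightarrow> T (\<lambda>f. c *\<^sub>R \<Phi> f) = c *\<^sub>R T \<Phi>"
  unfolding bl_F_def by blast

lemma blF_out: "bl_F T \<Longrightarrow> \<Phi> \<notin> FY \<Longrightarrow> T \<Phi> = 0"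
  unfolding bl_F_def by blast

lemma blF_zero:
  fixes T :: "((('a::real_normed_vector \<Rightarrow> 'b::real_normed_vector) \<Rightarrow> 'b) \<Rightarrow> 'b)"
  assumes "bl_F T" shows "T (\<lambda>f. 0) = 0"
  using blF_scale[OF assms FY_zero, of 0] by simp

lemma blF_diff:
  fixes T :: "((('a::real_normed_vector \<Rightarrow> 'b::real_normed_vector) \<Rightarrow> 'b) \<Rightarrow> 'b)"
  assumes "bl_F T" "\<Phi> \<in> FY" "\<Psi> \<in> FY"
  shows "T (\<lambda>f. \<Phi> f - \<Psi> f) = T \<Phi> - T \<Psi>"
  using blF_add[OF assms(1,2) FY_scale[OF assms(3), of "-1"]] blF_scale[OF assms(1,3), of "-1"]
  by simp

lemma blF_bound:
  fixes T :: "((('a::real_normed_vector \<Rightarrow> 'b::real_normed_vector) \<Rightarrow> 'b) \<Rightarrow> 'b)"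
  assumes "bl_F T"
  obtains K where "0 \<le> K" "\<And>\<Phi>. \<Phi> \<in> FY \<Longrightarrow> norm (T \<Phi>) \<le> K * opnormL \<Phi>"
proof -
  obtain K where K: "\<forall>\<Phi>\<in>FY. norm (T \<Phi>) \<le> K * opnormL \<Phi>"
    using assms unfolding bl_F_def by blast
  have "norm (T \<Phi>) \<le> max K 0 * opnormL \<Phi>" if "\<Phi> \<in> FY" for \<Phi>
  proof -
    have "K * opnormL \<Phi> \<le> max K 0 * opnormL \<Phi>"
      using opL_nonneg[OF FY_bl[OF that]] by (intro mult_right_mono) auto
    then show ?thesis using K that by force
  qed
  then show ?thesis using that[of "max K 0"] by auto
qed

lemma opF_upper:
  fixes T :: "((('a::real_normed_vector \<Rightarrow> 'b::real_normed_vector) \<Rightarrow> 'b) \<Rightarrow> 'b)"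
  assumes "bl_F T" "\<Phi> \<in> FY" "opnormL \<Phi> \<le> 1"
  shows "norm (T \<Phi>) \<le> opnormF T"
proof -
  obtain K where K: "0 \<le> K" "\<And>\<Phi>. \<Phi> \<in> FY \<Longrightarrow> norm (T \<Phi>) \<le> K * opnormL \<Phi>"
    using blF_bound[OF assms(1)] by blast
  have "bdd_above {norm (T \<Phi>) | \<Phi>. \<Phi> \<in> FY \<and> opnormL \<Phi> \<le> 1}"
  proof (rule bdd_aboveI[of _ K])
    fix r assume "r \<in> {norm (T \<Phi>) | \<Phi>. \<Phi> \<in> FY \<and> opnormL \<Phi> \<le> 1}"
    then obtain \<Phi> where f: "\<Phi> \<in> FY" "opnormL \<Phi> \<le> 1" "r = norm (T \<Phi>)" by blast
    have "K * opnormL \<Phi> \<le> K * 1" using f K by (intro mult_left_mono) auto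
    then show "r \<le> K" using K(2)[OF f(1)] f by simp
  qed
  then show ?thesis unfolding opnormF_def using assms by (intro cSup_upper) auto
qed

lemma opF_nonneg:
  fixes T :: "((('a::real_normed_vector \<Rightarrow> 'b::real_normed_vector) \<Rightarrow> 'b) \<Rightarrow> 'b)"
  assumes "bl_F T" shows "0 \<le> opnormF T"
  using opF_upper[OF assms FY_zero] opL_zero norm_ge_zero by (metis order.trans order_refl zero_le_one)

lemma opF_le:
  fixes T :: "((('a::real_normed_vector \<Rightarrow> 'b::real_normed_vector) \<Rightarrow> 'b) \<Rightarrow> 'b)"
  assumes "\<And>\<Phi>. \<Phi> \<in> FY \<Longrightarrow> opnormL \<Phi> \<le> 1 \<Longrightarrow> norm (T \<Phi>) \<le> C"
  shows "opnormF T \<le> C"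
  unfolding opnormF_def
proof (rule cSup_least)
  show "{norm (T \<Phi>) | \<Phi>. \<Phi> \<in> FY \<and> opnormL \<Phi> \<le> 1} \<noteq> {}"
    using FY_zero opL_zero[where 'a='a and 'b='b] by auto
qed (use assms in auto)

lemma opL_zero_imp:
  assumes "bl_lip \<Phi>" "opnormL \<Phi> = 0"
  shows "\<Phi> = (\<lambda>f. 0)"
proof
  fix f
  show "\<Phi> f = 0"
  proof (cases "f \<in> Lip0")
    case True then show ?thesis using opL_ineq[OF assms(1) True] assms(2) by simp
  next
    case False then show ?thesis using bl_lip_out[OF assms(1)] by simp
  qed
qed

lemma opF_ineq:
  fixes T :: "((('a::real_normed_vector \<Rightarrow> 'b::real_normed_vector) \<Rightarrow> 'b) \<Rightarrow> 'b)"
  assumes "bl_F T" "\<Phi> \<in> FY"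
  shows "norm (T \<Phi>) \<le> opnormF T * opnormL \<Phi>"
proof (cases "opnormL \<Phi> = 0")
  case True
  then have "\<Phi> = (\<lambda>f. 0)" using opL_zero_imp FY_bl[OF assms(2)] by blast
  then show ?thesis using blF_zero[OF assms(1)] by (simp add: opL_zero)
next
  case False
  define N where "N = opnormL \<Phi>"
  have N: "0 < N" using False opL_nonneg[OF FY_bl[OF assms(2)]] N_def by auto
  define \<Psi> where "\<Psi> = (\<lambda>f. (1 / N) *\<^sub>R \<Phi> f)"
  have h: "\<Psi> \<in> FY" unfolding \<Psi>_def by (rule FY_scale[OF assms(2)])
  have "opnormL \<Psi> \<le> \<bar>1 / N\<bar> * N" unfolding \<Psi>_def N_def
    by (rule opL_smult[OF FY_bl[OF assms(2)]])
  then have h1: "opnormL \<Psi> \<le> 1" using N by simp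
  have "\<Phi> = (\<lambda>f. N *\<^sub>R \<Psi> f)" unfolding \<Psi>_def using N by auto
  then have "T \<Phi> = N *\<^sub>R T \<Psi>" using blF_scale[OF assms(1) h] by simp
  then have "norm (T \<Phi>) = N * norm (T \<Psi>)" using N by simp
  also have "\<dots> \<le> N * opnormF T"
    using opF_upper[OF assms(1) h h1] N by (intro mult_left_mono) auto
  finally show ?thesis unfolding N_def by (simp add: mult.commute)
qed

lemma T_span:
  fixes T :: "((('a::real_normed_vector \<Rightarrow> 'b::real_normed_vector) \<Rightarrow> 'b) \<Rightarrow> 'b)"
  assumes "bl_F T"
  shows "T (\<lambda>f. \<Sum>i<(n::nat). c i *\<^sub>R delta (p i) f) = (\<Sum>i<n. c i *\<^sub>R T (delta (p i)))"
proof (induction n)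
  case 0
  then show ?case using blF_zero[OF assms] by simp
next
  case (Suc n)
  have A: "(\<lambda>f. \<Sum>i<n. c i *\<^sub>R delta (p i) f) \<in> FY"
    by (rule span_FY) (unfold span_delta_def, intro CollectI exI[of _ n] exI[of _ c] exI[of _ p], rule refl)
  have B: "(\<lambda>f. c n *\<^sub>R delta (p n) f) \<in> FY" by (intro FY_scale delta_FY)
  have "T (\<lambda>f. \<Sum>i<Suc n. c i *\<^sub>R delta (p i) f)
      = T (\<lambda>f. (\<lambda>f. \<Sum>i<n. c i *\<^sub>R delta (p i) f) f + (\<lambda>f. c n *\<^sub>R delta (p n) f) f)" by simp
  also have "\<dots> = T (\<lambda>f. \<Sum>i<n. c i *\<^sub>R delta (p i) f) + T (\<lambda>f. c n *\<^sub>R delta (p n) f)"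
    by (rule blF_add[OF assms A B])
  also have "\<dots> = (\<Sum>i<Suc n. c i *\<^sub>R T (delta (p i)))"
    using Suc blF_scale[OF assms delta_FY] by simp
  finally show ?case .
qed

lemma T_unique:
  fixes T S :: "((('a::real_normed_vector \<Rightarrow> 'b::real_normed_vector) \<Rightarrow> 'b) \<Rightarrow> 'b)"
  assumes T: "bl_F T" and S: "bl_F S" and eq: "\<And>x. T (delta x) = S (delta x)"
  shows "T = S"
proof
  fix \<Phi> :: "('a \<Rightarrow> 'b) \<Rightarrow> 'b"
  show "T \<Phi> = S \<Phi>"
  proof (cases "\<Phi> \<in> FY")
    case False then show ?thesis using blF_out T S by metis
  next
    case True
    obtain Q where Q: "\<forall>n. Q n \<in> span_delta" "(\<lambda>n. opnormL (\<lambda>f. Q n f - \<Phi> f)) \<longlonglongrightarrow> 0"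
      using True unfolding FY_def by blast
    obtain K1 where K1: "0 \<le> K1" "\<And>\<Phi>. \<Phi> \<in> FY \<Longrightarrow> norm (T \<Phi>) \<le> K1 * opnormL \<Phi>"
      using blF_bound[OF T] by blast
    obtain K2 where K2: "0 \<le> K2" "\<And>\<Phi>. \<Phi> \<in> FY \<Longrightarrow> norm (S \<Phi>) \<le> K2 * opnormL \<Phi>"
      using blF_bound[OF S] by blast
    have QT: "T (Q n) = S (Q n)" for n
    proof -
      obtain m :: nat and c p where "Q n = (\<lambda>f. \<Sum>i<m. c i *\<^sub>R delta (p i) f)"
        using Q(1) unfolding span_delta_def by blast
      then show ?thesis using T_span[OF T] T_span[OF S] eq by simp
    qed
    have bnd: "norm (T \<Phi> - S \<Phi>) \<le> (K1 + K2) * opnormL (\<lambda>f. Q n f - \<Phi> f)" for n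
    proof -
      have D: "(\<lambda>f. Q n f - \<Phi> f) \<in> FY" using FY_diff span_FY Q(1) True by blast
      have "T \<Phi> - S \<Phi> = S (\<lambda>f. Q n f - \<Phi> f) - T (\<lambda>f. Q n f - \<Phi> f)"
        using blF_diff[OF T span_FY[OF Q(1)[rule_format]] True, of n]
              blF_diff[OF S span_FY[OF Q(1)[rule_format]] True, of n] QT[of n] by simp
      also have "norm \<dots> \<le> norm (S (\<lambda>f. Q n f - \<Phi> f)) + norm (T (\<lambda>f. Q n f - \<Phi> f))"
        by (rule norm_triangle_ineq4)
      also have "\<dots> \<le> K2 * opnormL (\<lambda>f. Q n f - \<Phi> f) + K1 * opnormL (\<lambda>f. Q n f - \<Phi> f)"
        using K1(2)[OF D] K2(2)[OF D] by simp
      finally show ?thesis by (simp add: algebra_simps)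
    qed
    have "norm (T \<Phi> - S \<Phi>) \<le> 0"
    proof (rule tendsto_le[OF sequentially_bot])
      show "(\<lambda>n. (K1 + K2) * opnormL (\<lambda>f. Q n f - \<Phi> f)) \<longlonglongrightarrow> 0"
        using tendsto_mult_right_zero[OF Q(2), of "K1 + K2"] .
    qed (use bnd in auto)
    then show ?thesis by simp
  qed
qed

definition Tg :: "('a::real_normed_vector \<Rightarrow> 'b::real_normed_vector) \<Rightarrow> ((('a \<Rightarrow> 'b) \<Rightarrow> 'b) \<Rightarrow> 'b)" where
  "Tg g = (\<lambda>\<Phi>. if \<Phi> \<in> FY then \<Phi> g else 0)"

lemma Tg_bl:
  assumes "g \<in> Lip0"
  shows "bl_F (Tg g)"
proof -
  have "norm (Tg g \<Phi>) \<le> lipnorm g * opnormL \<Phi>" if "\<Phi> \<in> FY" for \<Phi>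
    using opL_ineq[OF FY_bl[OF that] assms] that by (simp add: Tg_def mult.commute)
  then have b: "\<exists>K. \<forall>\<Phi>\<in>FY. norm (Tg g \<Phi>) \<le> K * opnormL \<Phi>" by blast
  show ?thesis unfolding bl_F_def
    using b by (auto simp: Tg_def FY_add FY_scale)
qed

lemma Tg_comp:
  assumes "g \<in> Lip0"
  shows "compdelta (Tg g) = g"
  using assms by (intro ext) (simp add: compdelta_def Tg_def delta_FY, simp add: delta_def)

lemma delta_zero: "delta 0 = (\<lambda>f. 0)"
  by (auto simp: delta_def Lip0_def)

lemma opL_delta_diff:
  "opnormL (\<lambda>f::'a::real_normed_vector \<Rightarrow> 'b::real_normed_vector. delta x f - delta y f) \<le> norm (x - y)"
proof (rule opL_le)
  fix f :: "'a \<Rightarrow> 'b" assume f: "f \<in> Lip0" "lipnorm f \<le> 1"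
  have "norm (f x - f y) \<le> lipnorm f * norm (x - y)" by (rule lip_ineq[OF f(1)])
  also have "\<dots> \<le> 1 * norm (x - y)" using f by (intro mult_right_mono) auto
  finally show "norm (delta x f - delta y f) \<le> norm (x - y)" using f by (simp add: delta_def)
qed

lemma comp_Lip0:
  fixes T :: "((('a::real_normed_vector \<Rightarrow> 'b::real_normed_vector) \<Rightarrow> 'b) \<Rightarrow> 'b)"
  assumes "bl_F T"
  shows "compdelta T \<in> Lip0"
    and "norm (compdelta T x - compdelta T y) \<le> opnormF T * norm (x - y)"
proof -
  have *: "norm (compdelta T x - compdelta T y) \<le> opnormF T * norm (x - y)" for x y
  proof -
    have "compdelta T x - compdelta T y = T (\<lambda>f. delta x f - delta y f)"
      unfolding compdelta_def using blF_diff[OF assms delta_FY delta_FY] by simp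
    also have "norm \<dots> \<le> opnormF T * opnormL (\<lambda>f::'a\<Rightarrow>'b. delta x f - delta y f)"
      using opF_ineq[OF assms FY_diff[OF delta_FY[of x] delta_FY[of y]]] by simp
    also have "\<dots> \<le> opnormF T * norm (x - y)"
      by (intro mult_left_mono opL_delta_diff opF_nonneg assms)
    finally show ?thesis .
  qed
  show "norm (compdelta T x - compdelta T y) \<le> opnormF T * norm (x - y)" by (rule *)
  show "compdelta T \<in> Lip0"
    by (rule Lip0I[OF _ opF_nonneg[OF assms] *]) (simp add: compdelta_def delta_zero blF_zero[OF assms])
qed

lemma iso:
  fixes T :: "((('a::real_normed_vector \<Rightarrow> 'b::real_normed_vector) \<Rightarrow> 'b) \<Rightarrow> 'b)"
  assumes "bl_F T"
  shows "lipnorm (compdelta T) = opnormF T"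
proof (rule antisym)
  show "lipnorm (compdelta T) \<le> opnormF T"
    by (rule lip_le[OF opF_nonneg[OF assms] comp_Lip0(2)[OF assms]])
next
  define g where "g = compdelta T"
  have g: "g \<in> Lip0" unfolding g_def by (rule comp_Lip0(1)[OF assms])
  have TT: "T = Tg g"
  proof (rule T_unique[OF assms Tg_bl[OF g]])
    fix x
    have "Tg g (delta x) = compdelta (Tg g) x" by (simp add: compdelta_def)
    also have "\<dots> = g x" by (simp add: Tg_comp[OF g])
    finally show "T (delta x) = Tg g (delta x)" by (simp add: g_def compdelta_def)
  qed
  show "opnormF T \<le> lipnorm (compdelta T)"
  proof (rule opF_le)
    fix \<Phi> :: "('a \<Rightarrow> 'b) \<Rightarrow> 'b" assume P: "\<Phi> \<in> FY" "opnormL \<Phi> \<le> 1"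
    have "norm (T \<Phi>) = norm (\<Phi> g)" using P by (simp add: TT Tg_def)
    also have "\<dots> \<le> opnormL \<Phi> * lipnorm g" by (rule opL_ineq[OF FY_bl[OF P(1)] g])
    also have "\<dots> \<le> 1 * lipnorm g" using P lip_nonneg[OF g] by (intro mult_right_mono) auto
    finally show "norm (T \<Phi>) \<le> lipnorm (compdelta T)" by (simp add: g_def)
  qed
qed

theorem mainTheorem9:
  fixes X_type :: "'a::banach itself" and Y_type :: "'b::banach itself"
  shows "bij_betw (compdelta :: ((('a \<Rightarrow> 'b) \<Rightarrow> 'b) \<Rightarrow> 'b) \<Rightarrow> 'a \<Rightarrow> 'b)
            {T. bl_F T} Lip0
    \<and> (\<forall>T S c. bl_F T \<longrightarrow> bl_F S \<longrightarrow>
          (compdelta (\<lambda>\<Phi>. T \<Phi> + S \<Phi>) :: 'a \<Rightarrow> 'b) = (\<lambda>x. compdelta T x + compdelta S x)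
        \<and> (compdelta (\<lambda>\<Phi>. c *\<^sub>R T \<Phi>) :: 'a \<Rightarrow> 'b) = (\<lambda>x. c *\<^sub>R compdelta T x))
    \<and> (\<forall>T. bl_F T \<longrightarrow> lipnorm (compdelta T :: 'a \<Rightarrow> 'b) = opnormF T)"
proof (intro conjI allI impI)
  show "bij_betw (compdelta :: ((('a \<Rightarrow> 'b) \<Rightarrow> 'b) \<Rightarrow> 'b) \<Rightarrow> 'a \<Rightarrow> 'b) {T. bl_F T} Lip0"
    unfolding bij_betw_def
  proof (intro conjI)
    show "inj_on (compdelta :: ((('a \<Rightarrow> 'b) \<Rightarrow> 'b) \<Rightarrow> 'b) \<Rightarrow> 'a \<Rightarrow> 'b) {T. bl_F T}"
    proof (rule inj_onI)
      fix T S :: "(('a \<Rightarrow> 'b) \<Rightarrow> 'b) \<Rightarrow> 'b"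
      assume "T \<in> {T. bl_F T}" "S \<in> {T. bl_F T}" "compdelta T = compdelta S"
      then show "T = S"
        by (intro T_unique) (auto simp: compdelta_def dest: fun_cong)
    qed
    show "(compdelta :: ((('a \<Rightarrow> 'b) \<Rightarrow> 'b) \<Rightarrow> 'b) \<Rightarrow> 'a \<Rightarrow> 'b) ` {T. bl_F T} = Lip0"
    proof
      show "(compdelta :: ((('a \<Rightarrow> 'b) \<Rightarrow> 'b) \<Rightarrow> 'b) \<Rightarrow> 'a \<Rightarrow> 'b) ` {T. bl_F T} \<subseteq> Lip0"
        using comp_Lip0(1) by blast
      show "Lip0 \<subseteq> (compdelta :: ((('a \<Rightarrow> 'b) \<Rightarrow> 'b) \<Rightarrow> 'b) \<Rightarrow> 'a \<Rightarrow> 'b) ` {T. bl_F T}"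
      proof
        fix g :: "'a \<Rightarrow> 'b" assume g: "g \<in> Lip0"
        then show "g \<in> compdelta ` {T. bl_F T}"
          using Tg_comp[OF g] Tg_bl[OF g] by (metis image_eqI mem_Collect_eq)
      qed
    qed
  qed
next
  fix T S :: "(('a \<Rightarrow> 'b) \<Rightarrow> 'b) \<Rightarrow> 'b" and c :: real
  show "(compdelta (\<lambda>\<Phi>. T \<Phi> + S \<Phi>) :: 'a \<Rightarrow> 'b) = (\<lambda>x. compdelta T x + compdelta S x)"
    by (simp add: compdelta_def o_def)
  show "(compdelta (\<lambda>\<Phi>. c *\<^sub>R T \<Phi>) :: 'a \<Rightarrow> 'b) = (\<lambda>x. c *\<^sub>R compdelta T x)"
    by (simp add: compdelta_def o_def)
next
  fix T :: "(('a \<Rightarrow> 'b) \<Rightarrow> 'b) \<Rightarrow> 'b"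
  assume "bl_F T"
  then show "lipnorm (compdelta T :: 'a \<Rightarrow> 'b) = opnormF T" by (rule iso)
qed

end
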